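(* There exists $A\in(0,\infty)$ depending only on the coefficients of the polynomial $P$ such that for all $\tau\in\mathbb{R}$ and $c\in(1,\infty)$ it holds $P(\tau,c)\ge \tau^n/(2n)-A\,c^{n/2}$.
   Context: $n\in2\mathbb{N}_+$, $n\ge4$; $P(\tau)=\sum_{m=0}^na_m\tau^m$ with $a_0,\dots,a_{n-1}\in\mathbb{R}$, $a_n=1/n$; and $P(\tau,c)=\sum_{m=0}^n a_m\sum_{k=0}^{\lfloor m/2\rfloor}\frac{(-1)^k m!}{(m-2k)!k!2^k}c^k\tau^{m-2k}$. *)

theory Defs
  imports Complex_Main
begin

definition Pc :: "nat \<Rightarrow> (nat \<Rightarrow> real) \<Rightarrow> real \<Rightarrow> real \<Rightarrow> real" where
  "Pc n a \<tau> c = (\<Sum>m = 0..n. a m * (\<Sum>k = 0..m div 2.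
      (-1) ^ k * fact m / (fact (m - 2 * k) * fact k * 2 ^ k) * c ^ k * \<tau> ^ (m - 2 * k)))"

end

theory Submission
  imports Defs
begin

lemma key_bound:
  fixes s x M :: real
  assumes s: "s \<ge> 1" and x: "x \<ge> 0" and M: "M \<ge> 1" and d: "2*k + j \<le> n" and jn: "j < n"
  shows "s^(2*k) * x^j \<le> x^n / M + M^n * s^n"
proof (cases "x \<le> M * s")
  case True
  have "s^(2*k) * x^j \<le> s^(2*k) * (M*s)^j"
    by (intro mult_left_mono power_mono) (use True x s in auto)
  also have "\<dots> = M^j * s^(2*k+j)" by (simp add: power_mult_distrib power_add)
  also have "\<dots> \<le> M^n * s^n"
    by (intro mult_mono power_increasing) (use s M d jn in auto)
  also have "\<dots> \<le> x^n / M + M^n * s^n" using x M by simp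
  finally show ?thesis .
next
  case False
  hence xs: "s \<le> x / M" using M by (simp add: field_simps)
  have "s^(2*k) \<le> s^(n-j)" by (rule power_increasing) (use s d in auto)
  also have "\<dots> \<le> (x/M)^(n-j)" by (rule power_mono) (use xs s in auto)
  finally have "s^(2*k) * x^j \<le> (x/M)^(n-j) * x^j" by (rule mult_right_mono) (use x in auto)
  also have "\<dots> = x^n / M^(n-j)"
    using jn by (simp add: power_divide power_add[symmetric])
  also have "\<dots> \<le> x^n / M"
  proof -
    have "M \<le> M^(n-j)" using M jn
      by (metis power_one_right power_increasing less_imp_le_nat zero_less_diff Suc_leI One_nat_def)
    thus ?thesis using M x by (intro divide_left_mono) auto
  qed
  also have "\<dots> \<le> x^n / M + M^n * s^n" using s M by simp
  finally show ?thesis .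
qed

theorem mainTheorem3:
  fixes n :: nat and a :: "nat \<Rightarrow> real"
  assumes "even n" and "n \<ge> 4" and "a n = 1 / real n"
  shows "\<exists>A>0. \<forall>\<tau> c :: real. c > 1 \<longrightarrow>
           Pc n a \<tau> c \<ge> \<tau> ^ n / (2 * real n) - A * c ^ (n div 2)"
proof -
  define co where "co m k = a m * ((-1) ^ k * fact m / (fact (m - 2 * k) * fact k * 2 ^ k))" for m k :: nat
  define B where "B = (\<Sum>m = 0..n. \<Sum>k = 0..m div 2. \<bar>co m k\<bar>)"
  define M where "M = 2 * real n * B + 1"
  have B0: "B \<ge> 0" unfolding B_def by (intro sum_nonneg) auto
  have M1: "M \<ge> 1" unfolding M_def using B0 by simp
  define A where "A = B * M^n + 1"
  have A0: "A > 0" unfolding A_def using B0 M1 by (simp add: add_nonneg_pos)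
  show ?thesis
  proof (intro exI[of _ A] conjI allI impI A0)
    fix \<tau> c :: real assume c: "c > 1"
    define s where "s = sqrt c"
    define x where "x = \<bar>\<tau>\<bar>"
    have s1: "s \<ge> 1" unfolding s_def using c by simp
    have x0: "x \<ge> 0" unfolding x_def by simp
    obtain h where h: "n = 2 * h" using assms(1) by blast
    have sn: "s^n = c^(n div 2)" unfolding s_def h using c
      by (simp add: power_mult)
    have xn: "x^n = \<tau>^n" unfolding x_def using assms(1) by (simp add: power_even_abs)
    define Q where "Q = x^n / M + M^n * s^n"
    define t where "t m k = co m k * c ^ k * \<tau> ^ (m - 2 * k)" for m k :: nat
    have Pc_eq: "Pc n a \<tau> c = (\<Sum>m = 0..n. \<Sum>k = 0..m div 2. t m k)"
      unfolding Pc_def t_def co_def by (simp add: sum_distrib_left mult.assoc)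
    have termb: "t m k \<ge> (if m = n \<and> k = 0 then \<tau>^n / real n else 0) - \<bar>co m k\<bar> * Q"
      if mk: "m \<le> n" "k \<le> m div 2" for m k
    proof (cases "m = n \<and> k = 0")
      case True
      have "t m k = \<tau>^n / real n" using True assms(3) unfolding t_def co_def by simp
      moreover have "\<bar>co m k\<bar> * Q \<ge> 0" unfolding Q_def using x0 s1 M1 by simp
      ultimately show ?thesis using True by simp
    next
      case False
      have jn: "m - 2*k < n" using False mk by auto
      have d: "2*k + (m - 2*k) \<le> n" using mk by auto
      have ck: "c^k = s^(2*k)" unfolding s_def using c by (simp add: power_mult)
      have "\<bar>t m k\<bar> = \<bar>co m k\<bar> * (s^(2*k) * x^(m-2*k))"
        unfolding t_def x_def ck using s1 by (simp add: abs_mult power_abs)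
      also have "\<dots> \<le> \<bar>co m k\<bar> * Q" unfolding Q_def
        by (intro mult_left_mono key_bound[OF s1 x0 M1 d jn]) auto
      finally show ?thesis using False by auto
    qed
    have "Pc n a \<tau> c \<ge> (\<Sum>m = 0..n. \<Sum>k = 0..m div 2. (if m = n \<and> k = 0 then \<tau>^n / real n else 0) - \<bar>co m k\<bar> * Q)"
      unfolding Pc_eq by (intro sum_mono) (use termb in simp)
    also have "(\<Sum>m = 0..n. \<Sum>k = 0..m div 2. (if m = n \<and> k = 0 then \<tau>^n / real n else 0) - \<bar>co m k\<bar> * Q)
        = \<tau>^n / real n - B * Q"
    proof -
      have "(\<Sum>m = 0..n. \<Sum>k = 0..m div 2. (if m = n \<and> k = 0 then \<tau>^n / real n else 0)) = \<tau>^n / real n"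
      proof -
        have "(\<Sum>m = 0..n. \<Sum>k = 0..m div 2. (if m = n \<and> k = 0 then \<tau>^n / real n else 0))
            = (\<Sum>m = 0..n. if m = n then \<tau>^n / real n else 0)"
          by (intro sum.cong refl) auto
        also have "\<dots> = \<tau>^n / real n" by simp
        finally show ?thesis .
      qed
      thus ?thesis unfolding B_def by (simp add: sum_subtractf sum_distrib_right)
    qed
    finally have L: "Pc n a \<tau> c \<ge> \<tau>^n / real n - B * Q" .
    have R: "\<tau>^n / real n - B * Q \<ge> \<tau> ^ n / (2 * real n) - A * c ^ (n div 2)"
    proof -
      have n0: "real n > 0" using assms(2) by simp
      have "B * (x^n / M) \<le> x^n / (2 * real n)"
      proof -
        have Mp: "M > 0" using M1 by simp
        have "2 * real n * B \<le> M" unfolding M_def by simp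
        hence "B / M \<le> 1 / (2 * real n)" using n0 Mp
          by (simp add: divide_simps mult.commute)
        hence "B / M * x^n \<le> 1 / (2 * real n) * x^n" using x0 by (intro mult_right_mono) auto
        thus ?thesis by simp
      qed
      moreover have "B * (M^n * s^n) \<le> A * c^(n div 2)"
        unfolding A_def sn[symmetric] using s1 by (simp add: algebra_simps)
      ultimately have "B * Q \<le> \<tau>^n / (2 * real n) + A * c^(n div 2)"
        unfolding Q_def xn[symmetric] by (simp add: distrib_left)
      moreover have "\<tau>^n / real n - \<tau>^n / (2 * real n) = \<tau>^n / (2 * real n)"
        using n0 by (simp add: field_simps)
      ultimately show ?thesis using xn by linarith
    qed
    from L R show "Pc n a \<tau> c \<ge> \<tau> ^ n / (2 * real n) - A * c ^ (n div 2)" by linarith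
  qed
qed

end
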